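(* Let $(M,g)$ be a time-oriented Lorentzian manifold with a continuous Lorentzian metric $g$. Then for every $p\in M$ the timelike future $I^+(p,M)$ and the timelike past $I^-(p,M)$ are open subsets of $M$.
   Context: A timelike curve is a piecewise smooth curve whose tangent vectors (where differentiable) are timelike, with left and right derivatives at each point lying in the same component of the timelike double cone; it is future (past) directed if its tangent vectors lie in the future (past) cone determined by the time orientation. $I^+(p,M)$ is the set of $q\in M$ such that there is a future directed timelike curve from $p$ to $q$; $I^-(p,M)$ is the set of $q$ such that there is a past directed timelike curve from $p$ to $q$. A time orientation is a continuous choice of one component of the timelike cone at each point, locally containing $\partial_{x^0}$ of some chart. *)

theory Defs
  imports "HOL-Analysis.Analysis"
begin

text \<open>A topological n-manifold M is modelled as a type 'm (Hausdorff, second countable),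
  with a smooth atlas of charts (U, phi), phi : U -> real^'n.  All tangent data
  (metric, tangent vectors, time orientation) are expressed in chart coordinates,
  with the usual transformation laws under the Jacobian of the transition maps.\<close>

type_synonym ('m,'n) chart = "'m set \<times> ('m \<Rightarrow> real^'n)"

definition partial_dir :: "'n::finite \<Rightarrow> (real^'n \<Rightarrow> real^'k) \<Rightarrow> real^'n \<Rightarrow> real^'k" where
  "partial_dir i f x = vector_derivative (\<lambda>t. f (x + t *\<^sub>R axis i 1)) (at 0)"

fun iter_partial :: "'n::finite list \<Rightarrow> (real^'n \<Rightarrow> real^'k) \<Rightarrow> real^'n \<Rightarrow> real^'k" where
  "iter_partial [] f = f"
| "iter_partial (i # is) f = partial_dir i (iter_partial is f)"

definition smooth_on :: "(real^'n::finite) set \<Rightarrow> (real^'n \<Rightarrow> real^'k) \<Rightarrow> bool" where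
  "smooth_on U f \<longleftrightarrow>
     (\<forall>is. continuous_on U (iter_partial is f) \<and>
        (\<forall>i. \<forall>x\<in>U. (\<lambda>t. iter_partial is f (x + t *\<^sub>R axis i 1)) differentiable (at 0)))"

fun cderiv :: "nat \<Rightarrow> (real \<Rightarrow> real^'n) \<Rightarrow> real set \<Rightarrow> real \<Rightarrow> real^'n" where
  "cderiv 0 f S = f"
| "cderiv (Suc k) f S = (\<lambda>t. vector_derivative (cderiv k f S) (at t within S))"

definition smooth_curve_on :: "real set \<Rightarrow> (real \<Rightarrow> real^'n) \<Rightarrow> bool" where
  "smooth_curve_on S f \<longleftrightarrow>
     (\<forall>k. \<forall>t\<in>S. (cderiv k f S has_vector_derivative cderiv (Suc k) f S t) (at t within S))"

definition is_chart :: "('m::topological_space, 'n::finite) chart \<Rightarrow> bool" where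
  "is_chart c \<longleftrightarrow> open (fst c) \<and> inj_on (snd c) (fst c) \<and> continuous_on (fst c) (snd c) \<and>
     open (snd c ` fst c) \<and> continuous_on (snd c ` fst c) (inv_into (fst c) (snd c))"

definition transition :: "('m, 'n::finite) chart \<Rightarrow> ('m, 'n) chart \<Rightarrow> real^'n \<Rightarrow> real^'n" where
  "transition c d = snd d \<circ> inv_into (fst c) (snd c)"

definition smooth_atlas :: "('m::{t2_space,second_countable_topology}, 'n::finite) chart set \<Rightarrow> bool" where
  "smooth_atlas A \<longleftrightarrow> (\<forall>c\<in>A. is_chart c) \<and> (\<Union>c\<in>A. fst c) = UNIV \<and>
     (\<forall>c\<in>A. \<forall>d\<in>A. smooth_on (snd c ` (fst c \<inter> fst d)) (transition c d))"

definition jac :: "('m, 'n::finite) chart \<Rightarrow> ('m, 'n) chart \<Rightarrow> 'm \<Rightarrow> real^'n^'n" where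
  "jac c d p = matrix (frechet_derivative (transition c d) (at (snd c p)))"

definition lorentz_sig :: "real^'n::finite^'n \<Rightarrow> bool" where
  "lorentz_sig G \<longleftrightarrow> transpose G = G \<and>
     (\<exists>(P::real^'n^'n) i0. invertible P \<and>
        transpose P ** G ** P = (\<chi> i j. if i = j then (if i = i0 then -1 else 1) else 0))"

text \<open>g c p is the coefficient matrix of the metric at p in chart c.\<close>
definition cont_lorentz_metric ::
  "('m::topological_space, 'n::finite) chart set \<Rightarrow> (('m,'n) chart \<Rightarrow> 'm \<Rightarrow> real^'n^'n) \<Rightarrow> bool" where
  "cont_lorentz_metric A g \<longleftrightarrow>
     (\<forall>c\<in>A. continuous_on (fst c) (g c) \<and> (\<forall>p\<in>fst c. lorentz_sig (g c p))) \<and>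
     (\<forall>c\<in>A. \<forall>d\<in>A. \<forall>p\<in>fst c \<inter> fst d. g c p = transpose (jac c d p) ** g d p ** jac c d p)"

definition tcone :: "(('m,'n::finite) chart \<Rightarrow> 'm \<Rightarrow> real^'n^'n) \<Rightarrow> ('m,'n) chart \<Rightarrow> 'm \<Rightarrow> (real^'n) set" where
  "tcone g c p = {v. v \<bullet> (g c p *v v) < 0}"

text \<open>A time orientation: F c p is the chosen (future) component of the timelike cone at p,
  in chart-c coordinates; it is compatible with chart changes, and locally contains the
  coordinate vector field of some coordinate (the x^0 direction) of some chart.\<close>
definition time_orientation ::
  "('m::topological_space, 'n::finite) chart set \<Rightarrow> (('m,'n) chart \<Rightarrow> 'm \<Rightarrow> real^'n^'n)
     \<Rightarrow> (('m,'n) chart \<Rightarrow> 'm \<Rightarrow> (real^'n) set) \<Rightarrow> bool" where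
  "time_orientation A g F \<longleftrightarrow>
     (\<forall>c\<in>A. \<forall>p\<in>fst c. \<exists>w\<in>tcone g c p. F c p = connected_component_set (tcone g c p) w) \<and>
     (\<forall>c\<in>A. \<forall>d\<in>A. \<forall>p\<in>fst c \<inter> fst d. \<forall>v. v \<in> F c p \<longleftrightarrow> jac c d p *v v \<in> F d p) \<and>
     (\<forall>p. \<exists>c\<in>A. \<exists>W i0. open W \<and> p \<in> W \<and> W \<subseteq> fst c \<and> (\<forall>q\<in>W. axis i0 1 \<in> F c q))"

definition smooth_piece :: "('m::topological_space, 'n::finite) chart set \<Rightarrow> (real \<Rightarrow> 'm) \<Rightarrow> real set \<Rightarrow> bool" where
  "smooth_piece A \<gamma> S \<longleftrightarrow>
     (\<forall>t\<in>S. \<forall>c\<in>A. \<gamma> t \<in> fst c \<longrightarrow>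
        (\<exists>\<delta>>0. \<gamma> ` (S \<inter> ball t \<delta>) \<subseteq> fst c \<and> smooth_curve_on (S \<inter> ball t \<delta>) (snd c \<circ> \<gamma>)))"

definition pw_smooth_curve :: "('m::topological_space, 'n::finite) chart set \<Rightarrow> (real \<Rightarrow> 'm) \<Rightarrow> real \<Rightarrow> real \<Rightarrow> bool" where
  "pw_smooth_curve A \<gamma> a b \<longleftrightarrow> a < b \<and> continuous_on {a..b} \<gamma> \<and>
     (\<exists>P. finite P \<and> a \<in> P \<and> b \<in> P \<and> P \<subseteq> {a..b} \<and>
        (\<forall>s\<in>P. \<forall>u\<in>P. s < u \<and> {s<..<u} \<inter> P = {} \<longrightarrow> smooth_piece A \<gamma> {s..u}))"

definition directed_timelike_curve ::
  "bool \<Rightarrow> ('m::topological_space, 'n::finite) chart set \<Rightarrow> (('m,'n) chart \<Rightarrow> 'm \<Rightarrow> (real^'n) set)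
     \<Rightarrow> (real \<Rightarrow> 'm) \<Rightarrow> real \<Rightarrow> real \<Rightarrow> bool" where
  "directed_timelike_curve fut A F \<gamma> a b \<longleftrightarrow> pw_smooth_curve A \<gamma> a b \<and>
     (\<forall>t\<in>{a..<b}. \<forall>c\<in>A. \<gamma> t \<in> fst c \<longrightarrow>
        (\<exists>v. ((snd c \<circ> \<gamma>) has_vector_derivative v) (at t within {t..b}) \<and>
             (if fut then v else - v) \<in> F c (\<gamma> t))) \<and>
     (\<forall>t\<in>{a<..b}. \<forall>c\<in>A. \<gamma> t \<in> fst c \<longrightarrow>
        (\<exists>v. ((snd c \<circ> \<gamma>) has_vector_derivative v) (at t within {a..t}) \<and>
             (if fut then v else - v) \<in> F c (\<gamma> t)))"

definition I_plus where
  "I_plus A F p = {q. \<exists>\<gamma> a b. directed_timelike_curve True A F \<gamma> a b \<and> \<gamma> a = p \<and> \<gamma> b = q}"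

definition I_minus where
  "I_minus A F p = {q. \<exists>\<gamma> a b. directed_timelike_curve False A F \<gamma> a b \<and> \<gamma> a = p \<and> \<gamma> b = q}"

end

theory Submission
  imports Defs
begin


lemma hS_norm:
  fixes h :: "real^'n::finite"
  assumes "i \<notin> S" "\<bar>\<tau>\<bar> \<le> \<bar>h$i\<bar>"
  shows "norm ((\<chi> j. if j \<in> S then h$j else 0) + \<tau> *\<^sub>R axis i 1) \<le> norm h"
  apply (rule norm_le_componentwise_cart)
  using assms by (auto simp: axis_def)

lemma partials_has_derivative:
  fixes G :: "real^'n::finite \<Rightarrow> real^'k::finite"
  assumes U: "open U" and x: "x \<in> U"
    and der: "\<And>i z. z \<in> U \<Longrightarrow> ((\<lambda>t. G (z + t *\<^sub>R axis i 1)) has_vector_derivative P i z) (at 0)"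
    and cont: "\<And>i. continuous_on U (P i)"
  shows "(G has_derivative (\<lambda>h. \<Sum>i\<in>UNIV. h$i *\<^sub>R P i x)) (at x)"
  unfolding has_derivative_at_alt
proof (intro conjI allI impI)
  show "bounded_linear (\<lambda>h. \<Sum>i\<in>UNIV. h$i *\<^sub>R P i x)"
    by (intro bounded_linear_sum bounded_linear_compose[OF bounded_linear_scaleR_left] bounded_linear_vec_nth)
  fix e :: real assume e: "e > 0"
  define e' where "e' = e / real CARD('n)"
  have e': "e' > 0" using e by (simp add: e'_def)
  have "\<forall>\<^sub>F z in at x. z \<in> U \<and> (\<forall>i. dist (P i z) (P i x) < e')"
  proof (intro eventually_conj eventually_all_finite)
    show "\<forall>\<^sub>F z in at x. z \<in> U" using U x by (simp add: eventually_at_topological) blast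
    fix i
    have "isCont (P i) x" using cont U x continuous_on_eq_continuous_at by blast
    then show "\<forall>\<^sub>F z in at x. dist (P i z) (P i x) < e'"
      using e' by (simp add: continuous_at tendsto_iff)
  qed
  then obtain d where d: "d > 0" and dd: "\<And>z. z \<noteq> x \<Longrightarrow> dist z x < d \<Longrightarrow> z \<in> U \<and> (\<forall>i. dist (P i z) (P i x) < e')"
    unfolding eventually_at by blast
  have D: "\<And>z. dist z x < d \<Longrightarrow> z \<in> U \<and> (\<forall>i. dist (P i z) (P i x) \<le> e')"
    using dd x e' by (metis dist_self less_imp_le)
  show "\<exists>d>0. \<forall>y. norm (y - x) < d \<longrightarrow> norm (G y - G x - (\<Sum>i\<in>UNIV. (y - x)$i *\<^sub>R P i x)) \<le> e * norm (y - x)"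
  proof (intro exI[of _ d] conjI allI impI d)
    fix y assume y: "norm (y - x) < d"
    define h where "h = y - x"
    define hS where "hS S = (\<chi> j. if j \<in> S then h$j else 0)" for S
    have main: "norm (G (x + hS S) - G x - (\<Sum>i\<in>S. h$i *\<^sub>R P i x)) \<le> e' * card S * norm h"
      if "finite S" for S
      using that
    proof (induction S rule: finite_induct)
      case empty
      have "hS {} = 0" by (simp add: hS_def vec_eq_iff)
      then show ?case by simp
    next
      case (insert i S)
      define y0 where "y0 = x + hS S"
      define t where "t = h$i"
      have hins: "x + hS (insert i S) = y0 + t *\<^sub>R axis i 1"
        using insert by (auto simp: hS_def y0_def t_def vec_eq_iff axis_def)
      define \<phi> where "\<phi> \<tau> = G (y0 + \<tau> *\<^sub>R axis i 1) - \<tau> *\<^sub>R P i x" for \<tau>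
      have seg: "\<bar>\<tau>\<bar> \<le> \<bar>t\<bar>" if "\<tau> \<in> closed_segment 0 t" for \<tau>
        using that by (auto simp: closed_segment_eq_real_ivl split: if_splits)
      have zin: "dist (y0 + \<tau> *\<^sub>R axis i 1) x < d" if "\<tau> \<in> closed_segment 0 t" for \<tau>
      proof -
        have "norm (hS S + \<tau> *\<^sub>R axis i 1) \<le> norm h"
          unfolding hS_def by (rule hS_norm) (use insert seg[OF that] t_def in auto)
        then show ?thesis using y h_def by (simp add: y0_def dist_norm algebra_simps)
      qed
      have "norm (\<phi> t - \<phi> 0) \<le> e' * norm (t - 0)"
      proof (rule differentiable_bound[of "closed_segment 0 t" _ "\<lambda>\<tau> u. u *\<^sub>R (P i (y0 + \<tau> *\<^sub>R axis i 1) - P i x)"])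
        show "convex (closed_segment 0 t)" by simp
        fix \<tau> assume \<tau>: "\<tau> \<in> closed_segment 0 t"
        define z where "z = y0 + \<tau> *\<^sub>R axis i 1"
        have zU: "z \<in> U" and zP: "dist (P i z) (P i x) \<le> e'" using D zin[OF \<tau>] by (auto simp: z_def)
        have d1: "((\<lambda>s. s - \<tau>) has_vector_derivative 1) (at \<tau>)"
          by (auto intro!: derivative_eq_intros)
        have "(((\<lambda>t. G (z + t *\<^sub>R axis i 1)) \<circ> (\<lambda>s. s - \<tau>)) has_vector_derivative (1 *\<^sub>R P i z)) (at \<tau>)"
          by (rule vector_diff_chain_at[OF d1]) (use der[OF zU] in simp)
        moreover have "((\<lambda>t. G (z + t *\<^sub>R axis i 1)) \<circ> (\<lambda>s. s - \<tau>)) = (\<lambda>s. G (y0 + s *\<^sub>R axis i 1))"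
          by (auto simp: z_def o_def algebra_simps)
        ultimately have "((\<lambda>s. G (y0 + s *\<^sub>R axis i 1)) has_vector_derivative P i z) (at \<tau>)" by simp
        then have "(\<phi> has_vector_derivative (P i z - P i x)) (at \<tau>)"
          unfolding \<phi>_def by (auto intro!: derivative_eq_intros)
        then show "(\<phi> has_derivative (\<lambda>u. u *\<^sub>R (P i (y0 + \<tau> *\<^sub>R axis i 1) - P i x))) (at \<tau> within closed_segment 0 t)"
          by (simp add: has_vector_derivative_def z_def has_derivative_at_withinI)
        show "onorm (\<lambda>u. u *\<^sub>R (P i (y0 + \<tau> *\<^sub>R axis i 1) - P i x)) \<le> e'"
          using onorm_scaleR_left[OF bounded_linear_ident, of "P i z - P i x"] zP
          by (simp add: z_def dist_norm onorm_id)
      qed auto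
      then have s1: "norm (G (y0 + t *\<^sub>R axis i 1) - G y0 - t *\<^sub>R P i x) \<le> e' * norm h"
      proof -
        assume "norm (\<phi> t - \<phi> 0) \<le> e' * norm (t - 0)"
        moreover have "norm t \<le> norm h" unfolding t_def by (simp add: component_le_norm_cart)
        moreover have "\<phi> t - \<phi> 0 = G (y0 + t *\<^sub>R axis i 1) - G y0 - t *\<^sub>R P i x"
          unfolding \<phi>_def by simp
        ultimately show ?thesis using e'
        proof -
          assume a: "norm (\<phi> t - \<phi> 0) \<le> e' * norm (t - 0)" "norm t \<le> norm h"
            "\<phi> t - \<phi> 0 = G (y0 + t *\<^sub>R axis i 1) - G y0 - t *\<^sub>R P i x" "e' > 0"
          have "e' * norm t \<le> e' * norm h" using a(2,4) by simp
          then show ?thesis using a(1,3) by simp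
        qed
      qed
      have "G (x + hS (insert i S)) - G x - (\<Sum>i\<in>insert i S. h$i *\<^sub>R P i x)
          = (G (y0 + t *\<^sub>R axis i 1) - G y0 - t *\<^sub>R P i x) + (G (x + hS S) - G x - (\<Sum>i\<in>S. h$i *\<^sub>R P i x))"
        using insert by (simp add: hins y0_def t_def algebra_simps)
      note eqn = this
      have "norm (G (x + hS (insert i S)) - G x - (\<Sum>i\<in>insert i S. h$i *\<^sub>R P i x))
          \<le> e' * norm h + e' * card S * norm h"
        unfolding eqn using s1 insert.IH norm_triangle_ineq[of "G (y0 + t *\<^sub>R axis i 1) - G y0 - t *\<^sub>R P i x" "G (x + hS S) - G x - (\<Sum>i\<in>S. h$i *\<^sub>R P i x)"]
        by linarith
      then show ?case using insert by (simp add: algebra_simps)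
    qed
    have "hS UNIV = h" by (simp add: hS_def vec_eq_iff)
    then have "norm (G y - G x - (\<Sum>i\<in>UNIV. h$i *\<^sub>R P i x)) \<le> e' * CARD('n) * norm h"
      using main[of UNIV] by (simp add: h_def)
    then show "norm (G y - G x - (\<Sum>i\<in>UNIV. (y - x)$i *\<^sub>R P i x)) \<le> e * norm (y - x)"
      by (simp add: e'_def h_def)
  qed
qed

lemma smooth_on_has_derivative:
  fixes f :: "real^'n::finite \<Rightarrow> real^'k::finite"
  assumes "open U" "smooth_on U f" "x \<in> U"
  shows "(iter_partial is f has_derivative (\<lambda>h. \<Sum>i\<in>UNIV. h$i *\<^sub>R iter_partial (i#is) f x)) (at x)"
proof (rule partials_has_derivative[OF assms(1,3)])
  fix i z assume z: "z \<in> U"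
  have "(\<lambda>t. iter_partial is f (z + t *\<^sub>R axis i 1)) differentiable (at 0)"
    using assms(2) z unfolding smooth_on_def by blast
  then show "((\<lambda>t. iter_partial is f (z + t *\<^sub>R axis i 1)) has_vector_derivative iter_partial (i # is) f z) (at 0)"
    by (simp add: partial_dir_def vector_derivative_works)
next
  fix i show "continuous_on U (iter_partial (i # is) f)"
    using assms(2) unfolding smooth_on_def by blast
qed

lemma smooth_curve_from_H:
  assumes perf: "\<And>\<tau>. \<tau> \<in> T \<Longrightarrow> \<tau> islimpt T"
    and H: "\<And>k \<tau>. \<tau> \<in> T \<Longrightarrow> (H k has_vector_derivative H (Suc k) \<tau>) (at \<tau> within T)"
    and f: "\<And>\<tau>. \<tau> \<in> T \<Longrightarrow> f \<tau> = H 0 \<tau>"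
  shows smooth_curve_from_H_eq: "\<And>\<tau>. \<tau> \<in> T \<Longrightarrow> cderiv n f T \<tau> = H n \<tau>"
    and smooth_curve_from_H_sm: "smooth_curve_on T f"
proof -
  have hd: "(cderiv k f T has_vector_derivative H (Suc k) \<tau>) (at \<tau> within T)"
    if eq: "\<And>\<tau>. \<tau> \<in> T \<Longrightarrow> cderiv k f T \<tau> = H k \<tau>" and t: "\<tau> \<in> T" for k \<tau>
    by (rule has_vector_derivative_transform_within[OF H[OF t], of 1]) (use eq t in auto)
  have eq: "\<And>\<tau>. \<tau> \<in> T \<Longrightarrow> cderiv k f T \<tau> = H k \<tau>" for k
  proof (induction k)
    case 0 then show ?case using f by simp
  next
    case (Suc k)
    have nb: "at \<tau> within T \<noteq> bot" using perf[OF Suc.prems] trivial_limit_within by blast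
    show ?case using vector_derivative_within[OF nb hd[OF Suc.IH Suc.prems]] by simp
  qed
  then show "\<And>\<tau>. \<tau> \<in> T \<Longrightarrow> cderiv n f T \<tau> = H n \<tau>" .
  show "smooth_curve_on T f"
    unfolding smooth_curve_on_def
  proof (intro allI ballI)
    fix k t assume t: "t \<in> T"
    show "(cderiv k f T has_vector_derivative cderiv (Suc k) f T t) (at t within T)"
    proof -
      have eqS: "cderiv (Suc k) f T t = H (Suc k) t" by (rule eq[OF t])
      show ?thesis by (subst eqS) (rule hd[OF eq t])
    qed
  qed
qed

lemma smooth_curve_restrict:
  assumes "smooth_curve_on T f" "T' \<subseteq> T" "\<And>\<tau>. \<tau> \<in> T' \<Longrightarrow> \<tau> islimpt T'"
    "\<And>\<tau>. \<tau> \<in> T' \<Longrightarrow> g \<tau> = f \<tau>"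
  shows "smooth_curve_on T' g"
proof (rule smooth_curve_from_H_sm[where H="\<lambda>k. cderiv k f T"])
  fix k \<tau> assume "\<tau> \<in> T'"
  then show "(cderiv k f T has_vector_derivative cderiv (Suc k) f T \<tau>) (at \<tau> within T')"
    using assms(1,2) unfolding smooth_curve_on_def
    by (meson has_vector_derivative_within_subset subsetD)
qed (use assms in auto)

lemma lists_Suc_image:
  "(\<lambda>(i, is). i # is) ` (UNIV \<times> {is::'a list. length is = k}) = {is. length is = Suc k}"
  by (auto simp: length_Suc_conv image_iff)

lemma finite_lists_len: "finite {is::'a::finite list. length is = k}"
  using finite_lists_length_eq[of "UNIV::'a set" k] by simp

lemma smooth_line:
  fixes f :: "real^'n::finite \<Rightarrow> real^'k::finite"
  assumes U: "open U" and sm: "smooth_on U f" and TU: "\<And>\<tau>. \<tau> \<in> T \<Longrightarrow> x0 + \<tau> *\<^sub>R u \<in> U"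
    and perf: "\<And>\<tau>. \<tau> \<in> T \<Longrightarrow> \<tau> islimpt T"
  shows "smooth_curve_on T (\<lambda>\<tau>. f (x0 + \<tau> *\<^sub>R u))"
proof -
  define c where "c is = prod_list (map (\<lambda>i. u$i) is)" for "is" :: "'n list"
  define H where "H k \<tau> = (\<Sum>is\<in>{is. length is = k}. c is *\<^sub>R iter_partial is f (x0 + \<tau> *\<^sub>R u))" for k \<tau>
  have one: "((\<lambda>\<tau>. iter_partial is f (x0 + \<tau> *\<^sub>R u)) has_vector_derivative
      (\<Sum>i\<in>UNIV. u$i *\<^sub>R iter_partial (i#is) f (x0 + \<tau> *\<^sub>R u))) (at \<tau>)"
    if "x0 + \<tau> *\<^sub>R u \<in> U" for "is" \<tau>
  proof -
    have l: "((\<lambda>\<tau>. x0 + \<tau> *\<^sub>R u) has_derivative (\<lambda>h. h *\<^sub>R u)) (at \<tau>)"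
      by (auto intro!: derivative_eq_intros)
    have "((\<lambda>\<tau>. iter_partial is f (x0 + \<tau> *\<^sub>R u)) has_derivative
        (\<lambda>h. \<Sum>i\<in>UNIV. (h *\<^sub>R u)$i *\<^sub>R iter_partial (i#is) f (x0 + \<tau> *\<^sub>R u))) (at \<tau>)"
      by (rule has_derivative_compose[OF l smooth_on_has_derivative[OF U sm that]])
    moreover have "(\<lambda>h. \<Sum>i\<in>UNIV. (h *\<^sub>R u)$i *\<^sub>R iter_partial (i#is) f (x0 + \<tau> *\<^sub>R u))
        = (\<lambda>h. h *\<^sub>R (\<Sum>i\<in>UNIV. u$i *\<^sub>R iter_partial (i#is) f (x0 + \<tau> *\<^sub>R u)))"
      by (simp add: scaleR_sum_right)
    ultimately show ?thesis by (simp add: has_vector_derivative_def)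
  qed
  have Hd: "(H k has_vector_derivative H (Suc k) \<tau>) (at \<tau>)" if "x0 + \<tau> *\<^sub>R u \<in> U" for k \<tau>
  proof -
    have "(H k has_vector_derivative
        (\<Sum>is\<in>{is. length is = k}. c is *\<^sub>R (\<Sum>i\<in>UNIV. u$i *\<^sub>R iter_partial (i#is) f (x0 + \<tau> *\<^sub>R u)))) (at \<tau>)"
      unfolding H_def[abs_def]
      by (intro has_vector_derivative_sum bounded_linear.has_vector_derivative[OF bounded_linear_scaleR_right] one that)
    moreover have "(\<Sum>is\<in>{is. length is = k}. c is *\<^sub>R (\<Sum>i\<in>UNIV. u$i *\<^sub>R iter_partial (i#is) f (x0 + \<tau> *\<^sub>R u)))
        = (\<Sum>p\<in>UNIV \<times> {is. length is = k}. c (fst p # snd p) *\<^sub>R iter_partial (fst p # snd p) f (x0 + \<tau> *\<^sub>R u))"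
      apply (simp add: scaleR_sum_right c_def)
      apply (subst sum.swap)
      apply (simp add: sum.cartesian_product case_prod_beta mult.commute)
      done
    moreover have "\<dots> = H (Suc k) \<tau>"
      unfolding H_def lists_Suc_image[symmetric, of k]
      by (subst sum.reindex) (auto simp: inj_on_def case_prod_beta)
    ultimately show ?thesis by simp
  qed
  show ?thesis
  proof (rule smooth_curve_from_H_sm[where H=H, OF perf])
    fix k \<tau> assume "\<tau> \<in> T"
    then show "(H k has_vector_derivative H (Suc k) \<tau>) (at \<tau> within T)"
      using Hd TU has_vector_derivative_at_within by blast
  next
    fix \<tau> show "f (x0 + \<tau> *\<^sub>R u) = H 0 \<tau>" by (simp add: H_def c_def)
  qed
qed



lemma cont_quad:
  fixes M :: "'a::topological_space \<Rightarrow> real^'n::finite^'n" and w :: "'a \<Rightarrow> real^'n"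
  assumes "continuous_on S M" "continuous_on S w"
  shows "continuous_on S (\<lambda>p. w p \<bullet> (M p *v w p))"
proof -
  have "(\<lambda>p. w p \<bullet> (M p *v w p)) = (\<lambda>p. \<Sum>i\<in>UNIV. w p $ i * (\<Sum>j\<in>UNIV. M p $ i $ j * w p $ j))"
    by (simp add: inner_vec_def matrix_vector_mult_def)
  show ?thesis unfolding \<open>_ = _\<close> using assms by (auto intro!: continuous_intros)
qed

lemma chart_image_open:
  assumes ch: "is_chart c" and W: "open W" "W \<subseteq> fst c"
  shows "open (snd c ` W)"
proof -
  let ?\<psi> = "inv_into (fst c) (snd c)"
  have "snd c ` W = snd c ` fst c \<inter> ?\<psi> -` W"
  proof
    show "snd c ` W \<subseteq> snd c ` fst c \<inter> ?\<psi> -` W"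
      using W ch unfolding is_chart_def by (auto simp: inv_into_f_f)
    show "snd c ` fst c \<inter> ?\<psi> -` W \<subseteq> snd c ` W"
      using W ch unfolding is_chart_def by (auto simp: f_inv_into_f)
  qed
  moreover have "open (snd c ` fst c \<inter> ?\<psi> -` W)"
    using ch W unfolding is_chart_def by (intro continuous_open_preimage) auto
  ultimately show ?thesis by simp
qed

lemma cone_nbhd:
  fixes g :: "('m::topological_space,'n::finite) chart \<Rightarrow> 'm \<Rightarrow> real^'n^'n"
    and F :: "('m,'n) chart \<Rightarrow> 'm \<Rightarrow> (real^'n) set"
  assumes ch: "is_chart c" and gc: "continuous_on (fst c) (g c)"
    and W: "open W" "q \<in> W" "W \<subseteq> fst c" and e: "\<And>q'. q' \<in> W \<Longrightarrow> e \<in> F c q'"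
    and comp: "\<And>q'. q' \<in> W \<Longrightarrow> \<exists>w\<in>tcone g c q'. F c q' = connected_component_set (tcone g c q') w"
    and v: "v \<in> F c q"
  shows "\<exists>\<epsilon>>0. \<exists>r>0. ball (snd c q) r \<subseteq> snd c ` W \<and>
           (\<forall>z\<in>ball (snd c q) r. ball v \<epsilon> \<subseteq> F c (inv_into (fst c) (snd c) z))"
proof -
  define \<psi> where "\<psi> = inv_into (fst c) (snd c)"
  have Fc: "F c q' = connected_component_set (tcone g c q') e" if "q' \<in> W" for q'
    using comp[OF that] e[OF that] connected_component_eq by metis
  have ot: "open (tcone g c q')" for q'
  proof -
    have "continuous_on UNIV (\<lambda>v. v \<bullet> (g c q' *v v))"
      by (rule cont_quad) (auto intro: continuous_intros)
    then show ?thesis unfolding tcone_def by (simp add: open_Collect_less continuous_on_const)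
  qed
  define C where "C = F c q"
  have C: "C = connected_component_set (tcone g c q) e" using Fc W by (simp add: C_def)
  have oC: "open C" unfolding C by (rule open_connected_component[OF ot])
  obtain \<epsilon>0 where \<epsilon>0: "\<epsilon>0 > 0" "ball v \<epsilon>0 \<subseteq> C" using oC v C_def open_contains_ball by blast
  define \<epsilon> where "\<epsilon> = \<epsilon>0 / 2"
  have \<epsilon>: "\<epsilon> > 0" "cball v \<epsilon> \<subseteq> C" using \<epsilon>0 by (auto simp: \<epsilon>_def)
  have "path_connected C" unfolding C
    by (rule connected_open_path_connected) (auto simp: ot open_connected_component)
  moreover have eC: "e \<in> C" using e W by (simp add: C_def)
  ultimately obtain p where p: "path p" "path_image p \<subseteq> C" "pathstart p = e" "pathfinish p = v"
    using v unfolding path_connected_def C_def by blast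
  define K where "K = path_image p \<union> cball v \<epsilon>"
  have Kc: "compact K" unfolding K_def using p by (intro compact_Un compact_path_image compact_cball)
  have Kconn: "connected K" unfolding K_def
    using p \<epsilon> by (intro connected_Un connected_path_image connected_cball) (auto simp: pathfinish_in_path_image[of p, simplified p])
  have KC: "K \<subseteq> C" unfolding K_def using p \<epsilon> by auto
  have eK: "e \<in> K" unfolding K_def using pathstart_in_path_image[of p] p by auto
  have KT: "K \<subseteq> tcone g c q" using KC C connected_component_subset by blast
  define \<Phi> where "\<Phi> = (\<lambda>pr :: (real^'n) \<times> (real^'n). snd pr \<bullet> (g c (\<psi> (fst pr)) *v snd pr))"
  define Ob where "Ob = (snd c ` fst c \<times> UNIV) \<inter> \<Phi> -` {..<0}"
  have cpsi: "continuous_on (snd c ` fst c) \<psi>" and oim: "open (snd c ` fst c)"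
    and inj: "inj_on (snd c) (fst c)" and ofc: "open (fst c)"
    using ch unfolding is_chart_def \<psi>_def by auto
  have "continuous_on (snd c ` fst c \<times> UNIV) (\<lambda>pr. g c (\<psi> (fst pr)))"
  proof (rule continuous_on_compose2[OF gc continuous_on_compose2[OF cpsi continuous_on_fst]])
    show "fst ` (snd c ` fst c \<times> UNIV) \<subseteq> snd c ` fst c" by auto
    show "(\<lambda>x. \<psi> (fst x)) ` (snd c ` fst c \<times> UNIV) \<subseteq> fst c"
      by (auto simp: \<psi>_def inv_into_into)
  qed (rule continuous_on_id)
  then have "continuous_on (snd c ` fst c \<times> UNIV) \<Phi>"
    unfolding \<Phi>_def by (intro cont_quad continuous_on_snd) auto
  then have oO: "open Ob" unfolding Ob_def
    by (intro continuous_open_preimage) (auto intro: open_Times oim)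
  define x where "x = snd c q"
  have \<psi>x: "\<psi> x = q" using inj W by (auto simp: \<psi>_def x_def inv_into_f_f)
  have "{x} \<times> K \<subseteq> Ob"
    using KT W \<psi>x unfolding Ob_def \<Phi>_def tcone_def x_def by auto
  then obtain X0 where X0: "x \<in> X0" "open X0" "X0 \<times> K \<subseteq> Ob" using Elementary_Topology.tube_lemma[OF Kc oO] by blast
  have oW: "open (snd c ` W)" by (rule chart_image_open[OF ch W(1,3)])
  have "open (X0 \<inter> snd c ` W)" "x \<in> X0 \<inter> snd c ` W" using X0 oW W by (auto simp: x_def)
  then obtain r where r: "r > 0" "ball x r \<subseteq> X0 \<inter> snd c ` W" using open_contains_ball by blast
  show ?thesis
  proof (intro exI conjI ballI)
    show "\<epsilon> > 0" "r > 0" by (fact \<epsilon> r)+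
    show "ball (snd c q) r \<subseteq> snd c ` W" using r by (auto simp: x_def)
    fix z assume z: "z \<in> ball (snd c q) r"
    then obtain w' where w': "w' \<in> W" "z = snd c w'" using r by (auto simp: x_def)
    have \<psi>z: "\<psi> z = w'" using w' W inj by (auto simp: \<psi>_def inv_into_f_f)
    have "K \<subseteq> tcone g c (\<psi> z)"
    proof
      fix k assume "k \<in> K"
      then have "(z, k) \<in> Ob" using X0 r z by (auto simp: x_def)
      then show "k \<in> tcone g c (\<psi> z)" by (simp add: Ob_def \<Phi>_def tcone_def)
    qed
    then have "K \<subseteq> F c (\<psi> z)"
      using Fc[of "\<psi> z"] \<psi>z w' connected_component_maximal[OF eK Kconn] by auto
    then show "ball v \<epsilon> \<subseteq> F c (inv_into (fst c) (snd c) z)"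
      unfolding \<psi>_def[symmetric] K_def by auto
  qed
qed



lemma interval_ball_perfect:
  fixes s b t \<delta> :: real
  assumes "s < b" "t \<in> {s..b}" "\<delta> > 0" "\<tau> \<in> {s..b} \<inter> ball t \<delta>"
  shows "\<tau> islimpt ({s..b} \<inter> ball t \<delta>)"
proof (rule connected_imp_perfect)
  show "connected ({s..b} \<inter> ball t \<delta>)"
    by (intro convex_connected convex_Int convex_ball) auto
  show "\<tau> \<in> {s..b} \<inter> ball t \<delta>" by fact
  fix z show "{s..b} \<inter> ball t \<delta> \<noteq> {z}"
  proof
    assume eq: "{s..b} \<inter> ball t \<delta> = {z}"
    have "t \<in> {s..b} \<inter> ball t \<delta>" using assms(2,3) by simp
    then have "t \<in> {z}" by (simp only: eq)
    then have tz: "t = z" by simp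
    define t' where "t' = (if t < b then min b (t + \<delta>/2) else max s (t - \<delta>/2))"
    have "t' \<in> {s..b} \<and> dist t t' < \<delta> \<and> t' \<noteq> t"
    proof (cases "t < b")
      case True
      then have "t' = min b (t + \<delta>/2)" by (simp add: t'_def)
      moreover have "s \<le> t" "t \<le> b" "\<delta> > 0" using assms(2,3) by auto
      ultimately have "s \<le> t'" "t' \<le> b" "\<bar>t - t'\<bar> < \<delta>" "t' \<noteq> t" using True by linarith+
      then show ?thesis by (simp add: dist_real_def)
    next
      case False
      then have "t' = max s (t - \<delta>/2)" by (simp add: t'_def)
      moreover have "s \<le> t" "t \<le> b" "\<delta> > 0" "s < b" using assms(1,2,3) by auto
      ultimately have "s \<le> t'" "t' \<le> b" "\<bar>t - t'\<bar> < \<delta>" "t' \<noteq> t" using False by linarith+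
      then show ?thesis by (simp add: dist_real_def)
    qed
    then have "t' \<in> {s..b} \<inter> ball t \<delta>" "t' \<noteq> t" by auto
    then have "t' \<in> {z}" by (simp only: eq)
    then show False using tz \<open>t' \<noteq> t\<close> by simp
  qed
qed

lemma smooth_piece_restrict:
  assumes sp: "smooth_piece A \<gamma> {s0..u0}" and sub: "s0 \<le> s1" "u1 \<le> u0" "s1 < u1"
    and eq: "\<And>\<tau>. \<tau> \<in> {s1..u1} \<Longrightarrow> \<gamma>' \<tau> = \<gamma> \<tau>"
  shows "smooth_piece A \<gamma>' {s1..u1}"
  unfolding smooth_piece_def
proof (intro ballI impI)
  fix t c assume t: "t \<in> {s1..u1}" and c: "c \<in> A" and tc: "\<gamma>' t \<in> fst c"
  have "t \<in> {s0..u0}" "\<gamma> t \<in> fst c" using t sub eq tc by auto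
  then obtain \<delta> where \<delta>: "\<delta> > 0" "\<gamma> ` ({s0..u0} \<inter> ball t \<delta>) \<subseteq> fst c"
      "smooth_curve_on ({s0..u0} \<inter> ball t \<delta>) (snd c \<circ> \<gamma>)"
    using sp c \<open>t \<in> {s0..u0}\<close> \<open>\<gamma> t \<in> fst c\<close> unfolding smooth_piece_def by meson
  show "\<exists>\<delta>>0. \<gamma>' ` ({s1..u1} \<inter> ball t \<delta>) \<subseteq> fst c \<and> smooth_curve_on ({s1..u1} \<inter> ball t \<delta>) (snd c \<circ> \<gamma>')"
  proof (intro exI conjI)
    show "\<delta> > 0" by fact
    show "\<gamma>' ` ({s1..u1} \<inter> ball t \<delta>) \<subseteq> fst c"
    proof
      fix y assume "y \<in> \<gamma>' ` ({s1..u1} \<inter> ball t \<delta>)"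
      then obtain \<sigma> where \<sigma>: "\<sigma> \<in> {s1..u1} \<inter> ball t \<delta>" "y = \<gamma>' \<sigma>" by blast
      then have "\<sigma> \<in> {s0..u0} \<inter> ball t \<delta>" "y = \<gamma> \<sigma>" using sub eq by auto
      then show "y \<in> fst c" using \<delta>(2) by blast
    qed
    show "smooth_curve_on ({s1..u1} \<inter> ball t \<delta>) (snd c \<circ> \<gamma>')"
    proof (rule smooth_curve_restrict[OF \<delta>(3)])
      show "{s1..u1} \<inter> ball t \<delta> \<subseteq> {s0..u0} \<inter> ball t \<delta>" using sub by auto
      fix \<tau> assume \<tau>: "\<tau> \<in> {s1..u1} \<inter> ball t \<delta>"
      show "\<tau> islimpt ({s1..u1} \<inter> ball t \<delta>)"
        by (rule interval_ball_perfect[OF sub(3) t \<delta>(1) \<tau>])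
      show "(snd c \<circ> \<gamma>') \<tau> = (snd c \<circ> \<gamma>) \<tau>" using eq \<tau> by simp
    qed
  qed
qed



lemma extend_curve:
  fixes A :: "('m::{t2_space,second_countable_topology}, 'n::finite) chart set"
    and g :: "('m,'n) chart \<Rightarrow> 'm \<Rightarrow> real^'n^'n"
    and F :: "('m,'n) chart \<Rightarrow> 'm \<Rightarrow> (real^'n) set"
  assumes atlas: "smooth_atlas A" and met: "cont_lorentz_metric A g" and tor: "time_orientation A g F"
    and cur: "directed_timelike_curve fut A F \<gamma> a b"
  shows "\<exists>N. open N \<and> \<gamma> b \<in> N \<and> (\<forall>q'\<in>N. \<exists>\<gamma>'. directed_timelike_curve fut A F \<gamma>' a b \<and> \<gamma>' a = \<gamma> a \<and> \<gamma>' b = q')"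
proof -
  define sg where "sg w = (if fut then w else - w)" for w :: "real^'n"
  have pw: "pw_smooth_curve A \<gamma> a b"
    and R: "\<And>t c. t \<in> {a..<b} \<Longrightarrow> c \<in> A \<Longrightarrow> \<gamma> t \<in> fst c \<Longrightarrow>
        \<exists>v. ((snd c \<circ> \<gamma>) has_vector_derivative v) (at t within {t..b}) \<and> sg v \<in> F c (\<gamma> t)"
    and L: "\<And>t c. t \<in> {a<..b} \<Longrightarrow> c \<in> A \<Longrightarrow> \<gamma> t \<in> fst c \<Longrightarrow>
        \<exists>v. ((snd c \<circ> \<gamma>) has_vector_derivative v) (at t within {a..t}) \<and> sg v \<in> F c (\<gamma> t)"
  proof -
    note CUR = cur[unfolded directed_timelike_curve_def]
    show "pw_smooth_curve A \<gamma> a b" using conjunct1[OF CUR] .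
    have R0: "\<forall>t\<in>{a..<b}. \<forall>c\<in>A. \<gamma> t \<in> fst c \<longrightarrow>
        (\<exists>v. ((snd c \<circ> \<gamma>) has_vector_derivative v) (at t within {t..b}) \<and> sg v \<in> F c (\<gamma> t))"
      using conjunct1[OF conjunct2[OF CUR]] unfolding sg_def .
    have L0: "\<forall>t\<in>{a<..b}. \<forall>c\<in>A. \<gamma> t \<in> fst c \<longrightarrow>
        (\<exists>v. ((snd c \<circ> \<gamma>) has_vector_derivative v) (at t within {a..t}) \<and> sg v \<in> F c (\<gamma> t))"
      using conjunct2[OF conjunct2[OF CUR]] unfolding sg_def .
    show "\<And>t c. t \<in> {a..<b} \<Longrightarrow> c \<in> A \<Longrightarrow> \<gamma> t \<in> fst c \<Longrightarrow>
        \<exists>v. ((snd c \<circ> \<gamma>) has_vector_derivative v) (at t within {t..b}) \<and> sg v \<in> F c (\<gamma> t)"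
      by (rule R0[rule_format])
    show "\<And>t c. t \<in> {a<..b} \<Longrightarrow> c \<in> A \<Longrightarrow> \<gamma> t \<in> fst c \<Longrightarrow>
        \<exists>v. ((snd c \<circ> \<gamma>) has_vector_derivative v) (at t within {a..t}) \<and> sg v \<in> F c (\<gamma> t)"
      by (rule L0[rule_format])
  qed
  note PW = pw[unfolded pw_smooth_curve_def]
  have ab: "a < b" using conjunct1[OF PW] .
  have c\<gamma>: "continuous_on {a..b} \<gamma>" using conjunct1[OF conjunct2[OF PW]] .
  have "\<exists>P. finite P \<and> a \<in> P \<and> b \<in> P \<and> P \<subseteq> {a..b} \<and>
        (\<forall>s\<in>P. \<forall>u\<in>P. s < u \<and> {s<..<u} \<inter> P = {} \<longrightarrow> smooth_piece A \<gamma> {s..u})"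
    using conjunct2[OF conjunct2[OF PW]] .
  then obtain P where PP: "finite P \<and> a \<in> P \<and> b \<in> P \<and> P \<subseteq> {a..b} \<and>
        (\<forall>s\<in>P. \<forall>u\<in>P. s < u \<and> {s<..<u} \<inter> P = {} \<longrightarrow> smooth_piece A \<gamma> {s..u})"
    by (rule exE)
  have P: "finite P" "a \<in> P" "b \<in> P" "P \<subseteq> {a..b}"
    using conjunct1[OF PP] conjunct1[OF conjunct2[OF PP]] conjunct1[OF conjunct2[OF conjunct2[OF PP]]]
      conjunct1[OF conjunct2[OF conjunct2[OF conjunct2[OF PP]]]] by - assumption+
  have Ppc0: "\<forall>s\<in>P. \<forall>u\<in>P. s < u \<and> {s<..<u} \<inter> P = {} \<longrightarrow> smooth_piece A \<gamma> {s..u}"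
    using conjunct2[OF conjunct2[OF conjunct2[OF conjunct2[OF PP]]]] .
  have Ppc: "smooth_piece A \<gamma> {s..u}" if h: "s \<in> P" "u \<in> P" "s < u" "{s<..<u} \<inter> P = {}" for s u
    using bspec[OF bspec[OF Ppc0 h(1)] h(2)] conjI[OF h(3) h(4)] by (rule mp)
  define q where "q = \<gamma> b"
  note TO = tor[unfolded time_orientation_def]
  have TO1: "\<forall>c\<in>A. \<forall>p\<in>fst c. \<exists>w\<in>tcone g c p. F c p = connected_component_set (tcone g c p) w"
    using conjunct1[OF TO] .
  have TO2: "\<forall>c\<in>A. \<forall>d\<in>A. \<forall>p\<in>fst c \<inter> fst d. \<forall>v. v \<in> F c p \<longleftrightarrow> jac c d p *v v \<in> F d p"
    using conjunct1[OF conjunct2[OF TO]] .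
  have TO3: "\<forall>p. \<exists>c\<in>A. \<exists>W i0. open W \<and> p \<in> W \<and> W \<subseteq> fst c \<and> (\<forall>q\<in>W. axis i0 1 \<in> F c q)"
    using conjunct2[OF conjunct2[OF TO]] .
  obtain c where c: "c \<in> A" and cW: "\<exists>W i0. open W \<and> q \<in> W \<and> W \<subseteq> fst c \<and> (\<forall>q\<in>W. axis i0 1 \<in> F c q)"
    using TO3[rule_format, of q] by (rule bexE)
  from cW obtain W i0 where WW: "open W \<and> q \<in> W \<and> W \<subseteq> fst c \<and> (\<forall>q\<in>W. axis i0 1 \<in> F c q)"
    by (elim exE)
  have W: "open W" "q \<in> W" "W \<subseteq> fst c"
    using conjunct1[OF WW] conjunct1[OF conjunct2[OF WW]] conjunct1[OF conjunct2[OF conjunct2[OF WW]]] by - assumption+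
  have ax: "axis i0 1 \<in> F c q'" if "q' \<in> W" for q'
    using bspec[OF conjunct2[OF conjunct2[OF conjunct2[OF WW]]] that] .
  note ATL = atlas[unfolded smooth_atlas_def]
  have charts: "is_chart d" if "d \<in> A" for d using bspec[OF conjunct1[OF ATL] that] .
  have atl3: "\<forall>c\<in>A. \<forall>d\<in>A. smooth_on (snd c ` (fst c \<inter> fst d)) (transition c d)"
    using conjunct2[OF conjunct2[OF ATL]] .
  have ch: "is_chart c" using charts c .
  have gc: "continuous_on (fst c) (g c)"
    using conjunct1[OF bspec[OF conjunct1[OF met[unfolded cont_lorentz_metric_def]] c]] .
  have comp: "\<exists>w\<in>tcone g c q'. F c q' = connected_component_set (tcone g c q') w" if "q' \<in> W" for q'
    using bspec[OF bspec[OF TO1 c] subsetD[OF W(3) that]] .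
  have tclause: "\<And>c d p v. c \<in> A \<Longrightarrow> d \<in> A \<Longrightarrow> p \<in> fst c \<inter> fst d \<Longrightarrow> v \<in> F c p \<longleftrightarrow> jac c d p *v v \<in> F d p"
    by (rule TO2[rule_format])
  have bab: "b \<in> {a<..b}" using ab by simp
  obtain v where v: "((snd c \<circ> \<gamma>) has_vector_derivative v) (at b within {a..b})" "sg v \<in> F c q"
    using L[OF bab c] W unfolding q_def by blast
  obtain \<epsilon> r where \<epsilon>r: "\<epsilon> > 0" "r > 0" "ball (snd c q) r \<subseteq> snd c ` W"
      "\<And>z. z \<in> ball (snd c q) r \<Longrightarrow> ball (sg v) \<epsilon> \<subseteq> F c (inv_into (fst c) (snd c) z)"
    using cone_nbhd[where c=c and g=g and W=W and q=q and e="axis i0 1" and F=F and v="sg v", OF ch gc W ax comp v(2)] by blast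
  define \<psi> where "\<psi> = inv_into (fst c) (snd c)"
  define x where "x = snd c q"
  have ofc: "open (fst c)" and inj: "inj_on (snd c) (fst c)" and csc: "continuous_on (fst c) (snd c)"
    and oim: "open (snd c ` fst c)" and cpsi: "continuous_on (snd c ` fst c) \<psi>"
    using ch by (auto simp: is_chart_def \<psi>_def)
  define N1 where "N1 = W \<inter> (fst c \<inter> snd c -` ball x (r/2))"
  have oN1: "open N1" unfolding N1_def using W(1) continuous_open_preimage[OF csc ofc open_ball] by (rule open_Int)
  have qN1: "q \<in> N1" using W(2,3) \<epsilon>r(2) by (simp add: N1_def x_def subset_iff)
  obtain \<eta>1 where \<eta>1: "\<eta>1 > 0" "\<And>s. s \<in> {a..b} \<Longrightarrow> dist s b < \<eta>1 \<Longrightarrow> \<gamma> s \<in> N1"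
  proof -
    have "b \<in> {a..b}" using ab by simp
    then obtain A' where A': "open A'" "b \<in> A'" "\<And>y. y \<in> {a..b} \<Longrightarrow> y \<in> A' \<Longrightarrow> \<gamma> y \<in> N1"
      using c\<gamma>[unfolded continuous_on_topological, rule_format, OF \<open>b \<in> {a..b}\<close> oN1 qN1[unfolded q_def]] by blast
    then obtain e where e: "e > 0" "ball b e \<subseteq> A'" using open_contains_ball by blast
    show ?thesis
    proof (rule that[OF e(1)])
      fix s assume "s \<in> {a..b}" "dist s b < e"
      then show "\<gamma> s \<in> N1" using e(2) A'(3) by (auto simp: dist_commute)
    qed
  qed
  obtain \<eta>2 where \<eta>2: "\<eta>2 > 0" "\<And>s. s \<in> {a..b} \<Longrightarrow> norm (s - b) < \<eta>2 \<Longrightarrow>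
      norm (snd c (\<gamma> s) - x - (s - b) *\<^sub>R v) \<le> \<epsilon>/2 * norm (s - b)"
  proof -
    have "\<epsilon>/2 > 0" using \<epsilon>r(1) by simp
    with v(1) obtain d where "d > 0" "\<forall>y\<in>{a..b}. norm (y - b) < d \<longrightarrow>
        norm ((snd c \<circ> \<gamma>) y - (snd c \<circ> \<gamma>) b - (y - b) *\<^sub>R v) \<le> \<epsilon>/2 * norm (y - b)"
      unfolding has_vector_derivative_def has_derivative_within_alt by blast
    then show ?thesis using that by (auto simp: x_def q_def)
  qed
  define s0 where "s0 = Max (P - {b})"
  have fPb: "finite (P - {b})" "a \<in> P - {b}"
    using P(1,2) ab by simp_all
  have ne: "P - {b} \<noteq> {}" using fPb(2) by blast
  have s0Pb: "s0 \<in> P - {b}" unfolding s0_def by (rule Max_in[OF fPb(1) ne])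
  have s0b: "s0 \<le> b" using subsetD[OF P(4)] s0Pb by simp
  have s0: "s0 \<in> P" "s0 < b" "a \<le> s0"
    using s0Pb s0b Max_ge[OF fPb(1) fPb(2)] unfolding s0_def[symmetric] by auto
  define m where "m = min (b - s0) (min \<eta>1 \<eta>2)"
  have m: "m > 0" "m \<le> b - s0" "m \<le> \<eta>1" "m \<le> \<eta>2" using s0(2) \<eta>1(1) \<eta>2(1) by (auto simp: m_def)
  define s where "s = b - m / 2"
  have s: "s0 < s" "s < b" "a < s" "b - s < \<eta>1" "b - s < \<eta>2" using m s0(2,3) by (auto simp: s_def)
  have sab: "s \<in> {a..b}" using s by simp
  define xs where "xs = snd c (\<gamma> s)"
  have "\<gamma> s \<in> N1" using \<eta>1(2)[OF sab] s by (simp add: dist_real_def)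
  then have \<gamma>sW: "\<gamma> s \<in> W" and xsb: "xs \<in> ball x (r/2)" by (auto simp: N1_def xs_def dist_commute)
  have bs: "b - s > 0" using s by simp
  have dq: "norm ((1/(b-s)) *\<^sub>R (x - xs) - v) \<le> \<epsilon>/2"
  proof -
    have n: "norm (xs - x - (s - b) *\<^sub>R v) \<le> \<epsilon>/2 * (b - s)"
      using \<eta>2(2)[OF sab] s unfolding xs_def by simp
    have "(1/(b-s)) *\<^sub>R (x - xs) - v = (1/(b-s)) *\<^sub>R (x - xs - (b-s) *\<^sub>R v)"
      using bs by (simp add: scaleR_right_diff_distrib)
    also have "x - xs - (b-s) *\<^sub>R v = - (xs - x - (s - b) *\<^sub>R v)" by (simp add: algebra_simps)
    finally have "norm ((1/(b-s)) *\<^sub>R (x - xs) - v) = (1/(b-s)) * norm (xs - x - (s - b) *\<^sub>R v)"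
      using bs by (simp add: norm_minus_commute)
    also have "\<dots> \<le> (1/(b-s)) * (\<epsilon>/2 * (b - s))" by (rule mult_left_mono[OF n]) (use bs in simp)
    also have "\<dots> = \<epsilon>/2" using bs by simp
    finally show ?thesis .
  qed
  define \<rho> where "\<rho> = min (r/2) (\<epsilon> * (b - s) / 2)"
  have \<rho>: "\<rho> > 0" "\<rho> \<le> r/2" "\<rho> \<le> \<epsilon> * (b - s) / 2" using \<epsilon>r(1,2) bs by (auto simp: \<rho>_def)
  define N where "N = fst c \<inter> snd c -` ball x \<rho>"
  show ?thesis
  proof (rule exI[of _ N], intro conjI ballI)
    show "open N" unfolding N_def using continuous_open_preimage[OF csc ofc open_ball] .
    show "\<gamma> b \<in> N" using W(2,3) \<rho>(1) by (auto simp: N_def x_def q_def)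
    fix q' assume q': "q' \<in> N"

    have q'c: "q' \<in> fst c" and yb: "snd c q' \<in> ball x \<rho>" using q' by (auto simp: N_def)
    define y where "y = snd c q'"
    define u where "u = (1/(b-s)) *\<^sub>R (y - xs)"
    define x0 where "x0 = xs - s *\<^sub>R u"
    define line where "line \<tau> = x0 + \<tau> *\<^sub>R u" for \<tau>
    have uv: "norm (u - v) < \<epsilon>"
    proof -
      have "u - v = ((1/(b-s)) *\<^sub>R (x - xs) - v) + (1/(b-s)) *\<^sub>R (y - x)"
        by (simp add: u_def algebra_simps)
      then have "norm (u - v) \<le> norm ((1/(b-s)) *\<^sub>R (x - xs) - v) + norm ((1/(b-s)) *\<^sub>R (y - x))"
        by (metis norm_triangle_ineq)
      moreover have "norm ((1/(b-s)) *\<^sub>R (y - x)) = (1/(b-s)) * norm (y - x)" using bs by simp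
      moreover have "(1/(b-s)) * norm (y - x) < \<epsilon>/2"
      proof -
        have "norm (y - x) < \<epsilon> * (b - s) / 2" using yb \<rho>(3) by (simp add: y_def dist_norm norm_minus_commute)
        then have "(1/(b-s)) * norm (y - x) < (1/(b-s)) * (\<epsilon> * (b - s) / 2)"
          by (rule mult_strict_left_mono) (use bs in simp)
        then show ?thesis using bs by simp
      qed
      ultimately show ?thesis using dq by linarith
    qed
    have line_eq: "line \<tau> = xs + ((\<tau> - s)/(b-s)) *\<^sub>R (y - xs)" for \<tau>
    proof -
      have "line \<tau> = xs + (\<tau> - s) *\<^sub>R u" by (simp add: line_def x0_def scaleR_diff_left)
      also have "(\<tau> - s) *\<^sub>R u = ((\<tau> - s)/(b-s)) *\<^sub>R (y - xs)" by (simp add: u_def)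
      finally show ?thesis .
    qed
    have line_s: "line s = xs" by (simp add: line_eq)
    have line_b: "line b = y" using bs by (simp add: line_eq)
    have yb2: "y \<in> ball x (r/2)" using yb \<rho> by (simp add: y_def)
    have line_in: "line \<tau> \<in> ball x (r/2)" if "\<tau> \<in> {s..b}" for \<tau>
    proof -
      define \<theta> where "\<theta> = (\<tau> - s)/(b-s)"
      have \<theta>: "0 \<le> \<theta>" "\<theta> \<le> 1" using that bs by (auto simp: \<theta>_def divide_simps)
      have "(1 - \<theta>) *\<^sub>R xs + \<theta> *\<^sub>R y \<in> ball x (r/2)"
        by (rule convexD[OF convex_ball xsb yb2]) (use \<theta> in auto)
      moreover have "line \<tau> = xs + \<theta> *\<^sub>R (y - xs)" unfolding line_eq \<theta>_def ..
      moreover have "(1 - \<theta>) *\<^sub>R xs + \<theta> *\<^sub>R y = xs + \<theta> *\<^sub>R (y - xs)"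
        by (simp add: algebra_simps)
      ultimately show ?thesis by simp
    qed
    have lineW: "line \<tau> \<in> snd c ` W" and lineB: "line \<tau> \<in> ball (snd c q) r" if "\<tau> \<in> {s..b}" for \<tau>
      using line_in[OF that] \<epsilon>r(2,3) by (auto simp: x_def)
    have psiW: "\<psi> (line \<tau>) \<in> W \<and> snd c (\<psi> (line \<tau>)) = line \<tau>" if \<tau>: "\<tau> \<in> {s..b}" for \<tau>
    proof -
      obtain w where "w \<in> W" "line \<tau> = snd c w" using lineW[OF \<tau>] by blast
      then show ?thesis using W(3) inj by (auto simp: \<psi>_def inv_into_f_f)
    qed
    have Fu: "sg u \<in> F c (\<psi> (line \<tau>))" if "\<tau> \<in> {s..b}" for \<tau>
    proof -
      have "dist (sg v) (sg u) < \<epsilon>" using uv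
        by (cases fut) (auto simp: sg_def dist_minus dist_norm norm_minus_commute)
      then show ?thesis using \<epsilon>r(4)[OF lineB[OF that]] by (auto simp: \<psi>_def)
    qed
    define \<gamma>' where "\<gamma>' \<tau> = (if \<tau> \<le> s then \<gamma> \<tau> else \<psi> (line \<tau>))" for \<tau>
    have \<gamma>s: "\<gamma> s = \<psi> (line s)" using \<gamma>sW W(3) inj by (simp add: line_s xs_def \<psi>_def inv_into_f_f subset_iff)
    have \<gamma>'_line: "\<gamma>' \<tau> = \<psi> (line \<tau>)" if "s \<le> \<tau>" for \<tau>
      using that \<gamma>s by (cases "\<tau> = s") (auto simp: \<gamma>'_def)
    have \<gamma>'_\<gamma>: "\<gamma>' \<tau> = \<gamma> \<tau>" if "\<tau> \<le> s" for \<tau> using that by (simp add: \<gamma>'_def)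
    have \<gamma>'a: "\<gamma>' a = \<gamma> a" using s by (simp add: \<gamma>'_def)
    have \<gamma>'b: "\<gamma>' b = q'" using s q'c inj by (simp add: \<gamma>'_line line_b y_def \<psi>_def inv_into_f_f)
    have trans_eq: "(snd d \<circ> \<gamma>') \<tau> = transition c d (line \<tau>)" if "s \<le> \<tau>" for d \<tau>
      using that by (simp add: transition_def \<gamma>'_line \<psi>_def)
    define U where "U d = snd c ` (fst c \<inter> fst d)" for d :: "('m,'n) chart"
    have LU: "line \<tau> \<in> U d" if "\<tau> \<in> {s..b}" "\<gamma>' \<tau> \<in> fst d" for \<tau> d
    proof -
      have "\<psi> (line \<tau>) \<in> fst c \<inter> fst d" using psiW[OF that(1)] W(3) that(2) \<gamma>'_line[of \<tau>] that(1) by auto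
      then show ?thesis using psiW[OF that(1)] unfolding U_def by (metis image_eqI)
    qed
    have oU: "open (U d)" if "d \<in> A" for d
    proof -
      have "is_chart d" using charts that .
      then have "open (fst c \<inter> fst d)" using ofc by (simp add: is_chart_def open_Int)
      then show ?thesis unfolding U_def by (rule chart_image_open[OF ch]) auto
    qed
    have smU: "smooth_on (U d) (transition c d)" if "d \<in> A" for d
      using atl3 c that unfolding U_def by blast
    have Uback: "\<psi> z \<in> fst d" if "z \<in> U d" for z d
      using that inj by (auto simp: U_def \<psi>_def inv_into_f_f)
    have LD1: "\<exists>w. ((\<lambda>\<sigma>. transition c d (line \<sigma>)) has_vector_derivative w) (at \<tau>) \<and> sg w \<in> F d (\<gamma>' \<tau>)"
      if \<tau>: "\<tau> \<in> {s..b}" and d: "d \<in> A" and \<tau>d: "\<gamma>' \<tau> \<in> fst d" for \<tau> d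
    proof -
      define Dd where "Dd = (\<lambda>h. \<Sum>i\<in>UNIV. h$i *\<^sub>R iter_partial [i] (transition c d) (line \<tau>))"
      have hd: "(transition c d has_derivative Dd) (at (line \<tau>))"
        using smooth_on_has_derivative[OF oU[OF d] smU[OF d] LU[OF \<tau> \<tau>d], of "[]"] by (simp add: Dd_def)
      have bl: "bounded_linear Dd" and lin: "linear Dd" using hd has_derivative_bounded_linear has_derivative_linear by blast+
      have l: "((\<lambda>\<sigma>. line \<sigma>) has_derivative (\<lambda>h. h *\<^sub>R u)) (at \<tau>)"
        unfolding line_def by (auto intro!: derivative_eq_intros)
      have "((\<lambda>\<sigma>. transition c d (line \<sigma>)) has_derivative (\<lambda>h. Dd (h *\<^sub>R u))) (at \<tau>)"
        by (rule has_derivative_compose[OF l hd])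
      moreover have "(\<lambda>h. Dd (h *\<^sub>R u)) = (\<lambda>h. h *\<^sub>R Dd u)" using linear_cmul[OF lin] by auto
      ultimately have der: "((\<lambda>\<sigma>. transition c d (line \<sigma>)) has_vector_derivative Dd u) (at \<tau>)"
        by (simp add: has_vector_derivative_def)
      have fd: "Dd = frechet_derivative (transition c d) (at (line \<tau>))" by (rule frechet_derivative_at[OF hd])
      have sc: "snd c (\<gamma>' \<tau>) = line \<tau>" using psiW[OF \<tau>] \<gamma>'_line[of \<tau>] \<tau> by simp
      have jac: "jac c d (\<gamma>' \<tau>) *v w' = Dd w'" for w'
        unfolding jac_def sc fd[symmetric] using fun_cong[OF matrix_vector_mul(3)[OF bl], of w'] by simp
      have pin: "\<gamma>' \<tau> \<in> fst c \<inter> fst d" using psiW[OF \<tau>] \<gamma>'_line[of \<tau>] \<tau> W(3) \<tau>d by auto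
      have "sg u \<in> F c (\<gamma>' \<tau>)" using Fu[OF \<tau>] \<gamma>'_line[of \<tau>] \<tau> by simp
      then have "jac c d (\<gamma>' \<tau>) *v sg u \<in> F d (\<gamma>' \<tau>)" using tclause[OF c d pin] by blast
      moreover have "jac c d (\<gamma>' \<tau>) *v sg u = sg (Dd u)" using jac linear_neg[OF lin] by (simp add: sg_def)
      ultimately show ?thesis using der by auto
    qed
    show "\<exists>\<gamma>'. directed_timelike_curve fut A F \<gamma>' a b \<and> \<gamma>' a = \<gamma> a \<and> \<gamma>' b = q'"
    proof (intro exI conjI)
      show "\<gamma>' a = \<gamma> a" "\<gamma>' b = q'" by (fact \<gamma>'a \<gamma>'b)+
      show "directed_timelike_curve fut A F \<gamma>' a b"
        unfolding directed_timelike_curve_def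
      proof (intro conjI)
        show "pw_smooth_curve A \<gamma>' a b"
          unfolding pw_smooth_curve_def
        proof (intro conjI)
          show "a < b" by (fact ab)
          have "continuous_on {a..b} (\<lambda>\<tau>. if \<tau> \<le> s then \<gamma> \<tau> else \<psi> (line \<tau>))"
          proof (rule continuous_on_cases_le[where h="\<lambda>\<tau>. \<tau>"])
            show "continuous_on {\<tau> \<in> {a..b}. \<tau> \<le> s} \<gamma>"
              by (rule continuous_on_subset[OF c\<gamma>]) auto
            have "continuous_on {\<tau> \<in> {a..b}. s \<le> \<tau>} line" unfolding line_def[abs_def]
              by (intro continuous_intros)
            moreover have "line ` {\<tau> \<in> {a..b}. s \<le> \<tau>} \<subseteq> snd c ` fst c"
              using lineW W(3) by auto
            ultimately show "continuous_on {\<tau> \<in> {a..b}. s \<le> \<tau>} (\<lambda>\<tau>. \<psi> (line \<tau>))"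
              by (rule continuous_on_compose2[OF cpsi])
            show "continuous_on {a..b} (\<lambda>\<tau>. \<tau>)" by (rule continuous_on_id)
            fix \<tau> assume "\<tau> \<in> {a..b}" "\<tau> = s"
            then show "\<gamma> \<tau> = \<psi> (line \<tau>)" using \<gamma>s by simp
          qed
          then show "continuous_on {a..b} \<gamma>'" unfolding \<gamma>'_def[abs_def] .
          define P' where "P' = (P \<inter> {a..<s}) \<union> {s, b}"
          show "\<exists>P. finite P \<and> a \<in> P \<and> b \<in> P \<and> P \<subseteq> {a..b} \<and>
              (\<forall>s\<in>P. \<forall>u\<in>P. s < u \<and> {s<..<u} \<inter> P = {} \<longrightarrow> smooth_piece A \<gamma>' {s..u})"
          proof (rule exI[of _ P'], intro conjI ballI impI)
            show "finite P'" using P(1) by (simp add: P'_def)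
            show "a \<in> P'" using P(2) s(3) by (simp add: P'_def)
            show "b \<in> P'" by (simp add: P'_def)
            show "P' \<subseteq> {a..b}" using P(4) sab by (auto simp: P'_def)
            fix s1 u1 assume s1: "s1 \<in> P'" and u1: "u1 \<in> P'" and su: "s1 < u1 \<and> {s1<..<u1} \<inter> P' = {}"
            have lt: "s1 < u1" and gap: "\<And>p. p \<in> P' \<Longrightarrow> s1 < p \<Longrightarrow> p < u1 \<Longrightarrow> False"
              using su by auto
            have u1b: "u1 \<le> b" using u1 P(4) s by (auto simp: P'_def)
            show "smooth_piece A \<gamma>' {s1..u1}"
            proof (cases "s1 < s")
              case True
              have s1P: "s1 \<in> P" using s1 True s(2) by (auto simp: P'_def)
              have u1s: "u1 \<le> s"
              proof (rule ccontr)
                assume "\<not> u1 \<le> s"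
                then show False using gap[of s] True by (simp add: P'_def)
              qed
              define Q where "Q = {p \<in> P. s1 < p}"
              have fQ: "finite Q" using P(1) by (simp add: Q_def)
              have bQ: "b \<in> Q" using P(3) True s(2) by (simp add: Q_def)
              define u0 where "u0 = Min Q"
              have u0Q: "u0 \<in> Q" unfolding u0_def using fQ bQ by (intro Min_in) auto
              have u0: "u0 \<in> P" "s1 < u0" using u0Q by (auto simp: Q_def)
              have u0min: "\<And>p. p \<in> Q \<Longrightarrow> u0 \<le> p" unfolding u0_def using fQ by simp
              have gap0: "{s1<..<u0} \<inter> P = {}"
              proof (rule ccontr)
                assume "{s1<..<u0} \<inter> P \<noteq> {}"
                then obtain p where "p \<in> P" "s1 < p" "p < u0" by auto
                then show False using u0min[of p] by (simp add: Q_def)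
              qed
              have u10: "u1 \<le> u0"
              proof (rule ccontr)
                assume "\<not> u1 \<le> u0"
                then have "u0 \<in> P'" using u0 u1s s1P P(4) by (auto simp: P'_def)
                then show False using gap[of u0] u0 \<open>\<not> u1 \<le> u0\<close> by simp
              qed
              show ?thesis
              proof (rule smooth_piece_restrict[OF Ppc[OF s1P u0(1) u0(2) gap0]])
                show "s1 \<le> s1" "u1 \<le> u0" "s1 < u1" using u10 lt by simp_all
                fix \<tau> assume "\<tau> \<in> {s1..u1}"
                then show "\<gamma>' \<tau> = \<gamma> \<tau>" using u1s by (intro \<gamma>'_\<gamma>) simp
              qed
            next
              case False
              have s1s: "s1 = s"
              proof -
                have "s1 \<noteq> b" using lt u1b by simp
                then show ?thesis using s1 False by (auto simp: P'_def)
              qed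
              have u1b': "u1 = b" using u1 lt s1s by (auto simp: P'_def)
              show ?thesis unfolding s1s u1b' smooth_piece_def
              proof (intro ballI impI)
                fix t d assume t: "t \<in> {s..b}" and d: "d \<in> A" and td: "\<gamma>' t \<in> fst d"
                have "line t \<in> U d" by (rule LU[OF t td])
                then obtain \<rho>' where \<rho>': "\<rho>' > 0" "ball (line t) \<rho>' \<subseteq> U d"
                  using oU[OF d] open_contains_ball by blast
                define \<delta> where "\<delta> = \<rho>' / (norm u + 1)"
                have nu: "norm u + 1 > 0" using norm_ge_zero[of u] by linarith
                have \<delta>: "\<delta> > 0" using \<rho>'(1) nu by (simp add: \<delta>_def)
                have lU: "line \<sigma> \<in> U d" if "dist \<sigma> t < \<delta>" for \<sigma>
                proof -
                  have "dist (line \<sigma>) (line t) = \<bar>\<sigma> - t\<bar> * norm u"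
                    by (simp add: line_def dist_norm algebra_simps flip: scaleR_diff_left)
                  also have "\<dots> \<le> \<bar>\<sigma> - t\<bar> * (norm u + 1)" by (simp add: mult_left_mono)
                  also have "\<dots> < \<delta> * (norm u + 1)"
                    using that nu by (intro mult_strict_right_mono) (auto simp: dist_real_def)
                  also have "\<dots> = \<rho>'" using nu by (simp add: \<delta>_def)
                  finally have "line \<sigma> \<in> ball (line t) \<rho>'" by (simp add: dist_commute)
                  then show ?thesis using \<rho>'(2) by blast
                qed
                show "\<exists>\<delta>>0. \<gamma>' ` ({s..b} \<inter> ball t \<delta>) \<subseteq> fst d \<and> smooth_curve_on ({s..b} \<inter> ball t \<delta>) (snd d \<circ> \<gamma>')"
                proof (intro exI[of _ \<delta>] conjI \<delta>)
                  show "\<gamma>' ` ({s..b} \<inter> ball t \<delta>) \<subseteq> fst d"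
                  proof
                    fix z assume "z \<in> \<gamma>' ` ({s..b} \<inter> ball t \<delta>)"
                    then obtain \<sigma> where \<sigma>: "\<sigma> \<in> {s..b}" "dist \<sigma> t < \<delta>" "z = \<gamma>' \<sigma>"
                      by (auto simp: dist_commute)
                    then show "z \<in> fst d" using Uback[OF lU[OF \<sigma>(2)]] \<gamma>'_line[of \<sigma>] by simp
                  qed
                  have sl: "smooth_curve_on ({s..b} \<inter> ball t \<delta>) (\<lambda>\<sigma>. transition c d (x0 + \<sigma> *\<^sub>R u))"
                  proof (rule smooth_line[OF oU[OF d] smU[OF d]])
                    fix \<sigma> assume "\<sigma> \<in> {s..b} \<inter> ball t \<delta>"
                    then have "dist \<sigma> t < \<delta>" by (simp add: dist_commute)
                    then show "x0 + \<sigma> *\<^sub>R u \<in> U d" using lU unfolding line_def by blast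
                  next
                    fix \<sigma> assume "\<sigma> \<in> {s..b} \<inter> ball t \<delta>"
                    then show "\<sigma> islimpt ({s..b} \<inter> ball t \<delta>)"
                      by (rule interval_ball_perfect[OF s(2) t \<delta>])
                  qed
                  show "smooth_curve_on ({s..b} \<inter> ball t \<delta>) (snd d \<circ> \<gamma>')"
                  proof (rule smooth_curve_restrict[OF sl])
                    fix \<sigma> assume \<sigma>: "\<sigma> \<in> {s..b} \<inter> ball t \<delta>"
                    then show "\<sigma> islimpt ({s..b} \<inter> ball t \<delta>)"
                      by (rule interval_ball_perfect[OF s(2) t \<delta>])
                    show "(snd d \<circ> \<gamma>') \<sigma> = transition c d (x0 + \<sigma> *\<^sub>R u)"
                      using trans_eq[of \<sigma> d] \<sigma> by (simp add: line_def)
                  qed simp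
                qed
              qed
            qed
          qed
        qed
      next
        show "\<forall>t\<in>{a..<b}. \<forall>d\<in>A. \<gamma>' t \<in> fst d \<longrightarrow>
            (\<exists>w. ((snd d \<circ> \<gamma>') has_vector_derivative w) (at t within {t..b}) \<and> (if fut then w else - w) \<in> F d (\<gamma>' t))"
        proof (intro ballI impI)
          fix t d assume t: "t \<in> {a..<b}" and d: "d \<in> A" and td: "\<gamma>' t \<in> fst d"
          show "\<exists>w. ((snd d \<circ> \<gamma>') has_vector_derivative w) (at t within {t..b}) \<and> (if fut then w else - w) \<in> F d (\<gamma>' t)"
          proof (cases "t < s")
            case True
            have "\<gamma> t \<in> fst d" using td True \<gamma>'_\<gamma>[of t] by simp
            then obtain w where w: "((snd d \<circ> \<gamma>) has_vector_derivative w) (at t within {t..b})" "sg w \<in> F d (\<gamma> t)"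
              using R[OF t d] by blast
            have "((snd d \<circ> \<gamma>') has_vector_derivative w) (at t within {t..b})"
            proof (rule has_vector_derivative_transform_within[OF w(1)])
              show "0 < s - t" using True by simp
              show "t \<in> {t..b}" using t by simp
              fix x' assume "x' \<in> {t..b}" "dist x' t < s - t"
              then have "x' \<le> s" by (simp add: dist_real_def)
              then show "(snd d \<circ> \<gamma>) x' = (snd d \<circ> \<gamma>') x'" using \<gamma>'_\<gamma>[of x'] by simp
            qed
            then show ?thesis using w(2) True \<gamma>'_\<gamma>[of t] unfolding sg_def by auto
          next
            case False
            have ts: "t \<in> {s..b}" using False t by simp
            obtain w where w: "((\<lambda>\<sigma>. transition c d (line \<sigma>)) has_vector_derivative w) (at t)" "sg w \<in> F d (\<gamma>' t)"
              using LD1[OF ts d td] by blast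
            have "((snd d \<circ> \<gamma>') has_vector_derivative w) (at t within {t..b})"
            proof (rule has_vector_derivative_transform_within[OF has_vector_derivative_at_within[OF w(1)]])
              show "(0::real) < 1" by simp
              show "t \<in> {t..b}" using t by simp
              fix x' assume "x' \<in> {t..b}" "dist x' t < 1"
              then show "transition c d (line x') = (snd d \<circ> \<gamma>') x'" using trans_eq[of x' d] False by simp
            qed
            then show ?thesis using w(2) unfolding sg_def by auto
          qed
        qed
      next
        show "\<forall>t\<in>{a<..b}. \<forall>d\<in>A. \<gamma>' t \<in> fst d \<longrightarrow>
            (\<exists>w. ((snd d \<circ> \<gamma>') has_vector_derivative w) (at t within {a..t}) \<and> (if fut then w else - w) \<in> F d (\<gamma>' t))"
        proof (intro ballI impI)
          fix t d assume t: "t \<in> {a<..b}" and d: "d \<in> A" and td: "\<gamma>' t \<in> fst d"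
          show "\<exists>w. ((snd d \<circ> \<gamma>') has_vector_derivative w) (at t within {a..t}) \<and> (if fut then w else - w) \<in> F d (\<gamma>' t)"
          proof (cases "t \<le> s")
            case True
            have "\<gamma> t \<in> fst d" using td True \<gamma>'_\<gamma>[of t] by simp
            then obtain w where w: "((snd d \<circ> \<gamma>) has_vector_derivative w) (at t within {a..t})" "sg w \<in> F d (\<gamma> t)"
              using L[OF t d] by blast
            have "((snd d \<circ> \<gamma>') has_vector_derivative w) (at t within {a..t})"
            proof (rule has_vector_derivative_transform_within[OF w(1)])
              show "(0::real) < 1" by simp
              show "t \<in> {a..t}" using t by simp
              fix x' assume "x' \<in> {a..t}" "dist x' t < 1"
              then have "x' \<le> s" using True by simp
              then show "(snd d \<circ> \<gamma>) x' = (snd d \<circ> \<gamma>') x'" using \<gamma>'_\<gamma>[of x'] by simp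
            qed
            then show ?thesis using w(2) True \<gamma>'_\<gamma>[of t] unfolding sg_def by auto
          next
            case False
            have ts: "t \<in> {s..b}" using False t by simp
            obtain w where w: "((\<lambda>\<sigma>. transition c d (line \<sigma>)) has_vector_derivative w) (at t)" "sg w \<in> F d (\<gamma>' t)"
              using LD1[OF ts d td] by blast
            have "((snd d \<circ> \<gamma>') has_vector_derivative w) (at t within {a..t})"
            proof (rule has_vector_derivative_transform_within[OF has_vector_derivative_at_within[OF w(1)]])
              show "0 < t - s" using False by simp
              show "t \<in> {a..t}" using t by simp
              fix x' assume "x' \<in> {a..t}" "dist x' t < t - s"
              then have "s \<le> x'" by (simp add: dist_real_def)
              then show "transition c d (line x') = (snd d \<circ> \<gamma>') x'" using trans_eq[of x' d] by simp
            qed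
            then show ?thesis using w(2) unfolding sg_def by auto
          qed
        qed
      qed
    qed
  qed
qed


theorem proposition2p1:
  fixes A :: "('m::{t2_space,second_countable_topology}, 'n::finite) chart set"
    and g :: "('m,'n) chart \<Rightarrow> 'm \<Rightarrow> real^'n^'n"
    and F :: "('m,'n) chart \<Rightarrow> 'm \<Rightarrow> (real^'n) set"
  assumes "smooth_atlas A"
    and "cont_lorentz_metric A g"
    and "time_orientation A g F"
  shows "\<forall>p. open (I_plus A F p) \<and> open (I_minus A F p)"
proof (intro allI conjI)
  fix p
  have gen: "open {q. \<exists>\<gamma> a b. directed_timelike_curve fut A F \<gamma> a b \<and> \<gamma> a = p \<and> \<gamma> b = q}" for fut
  proof (subst open_subopen, intro ballI)
    fix q assume "q \<in> {q. \<exists>\<gamma> a b. directed_timelike_curve fut A F \<gamma> a b \<and> \<gamma> a = p \<and> \<gamma> b = q}"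
    then have "\<exists>\<gamma> a b. directed_timelike_curve fut A F \<gamma> a b \<and> \<gamma> a = p \<and> \<gamma> b = q" by simp
    then obtain \<gamma> a b where cur0: "directed_timelike_curve fut A F \<gamma> a b \<and> \<gamma> a = p \<and> \<gamma> b = q"
      by (elim exE)
    have cur: "directed_timelike_curve fut A F \<gamma> a b" "\<gamma> a = p" "\<gamma> b = q"
      using cur0 by simp_all
    obtain N where N: "open N" "\<gamma> b \<in> N"
      "\<forall>q'\<in>N. \<exists>\<gamma>'. directed_timelike_curve fut A F \<gamma>' a b \<and> \<gamma>' a = \<gamma> a \<and> \<gamma>' b = q'"
      using extend_curve[OF assms(1,2,3) cur(1)] by (elim exE conjE)
    have sub: "N \<subseteq> {q. \<exists>\<gamma> a b. directed_timelike_curve fut A F \<gamma> a b \<and> \<gamma> a = p \<and> \<gamma> b = q}"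
    proof
      fix q' assume "q' \<in> N"
      then have "\<exists>\<gamma>'. directed_timelike_curve fut A F \<gamma>' a b \<and> \<gamma>' a = \<gamma> a \<and> \<gamma>' b = q'"
        by (rule bspec[OF N(3)])
      then obtain \<gamma>' where g': "directed_timelike_curve fut A F \<gamma>' a b \<and> \<gamma>' a = \<gamma> a \<and> \<gamma>' b = q'"
        by (elim exE)
      then have "directed_timelike_curve fut A F \<gamma>' a b \<and> \<gamma>' a = p \<and> \<gamma>' b = q'"
        using cur(2) by simp
      then show "q' \<in> {q. \<exists>\<gamma> a b. directed_timelike_curve fut A F \<gamma> a b \<and> \<gamma> a = p \<and> \<gamma> b = q}"
        by (intro CollectI exI)
    qed
    show "\<exists>T. open T \<and> q \<in> T \<and> T \<subseteq> {q. \<exists>\<gamma> a b. directed_timelike_curve fut A F \<gamma> a b \<and> \<gamma> a = p \<and> \<gamma> b = q}"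
      using N(1,2) cur(3) sub by (intro exI[of _ N] conjI) simp_all
  qed
  show "open (I_plus A F p)" using gen[of True] unfolding I_plus_def .
  show "open (I_minus A F p)" using gen[of False] unfolding I_minus_def .
qed

end
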